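(* Let $\{n_k\}_{k\ge1}\subset\mathbb{Z}^+$ and $\{c_k\}_{k\ge1}\subset\mathbb{R}^+$ satisfy $n_k\ge 2$ and $n_kc_k<1$ for all $k\ge1$, let $I\subset\mathbb{R}$ be a nonempty closed interval, and let $E\in\mathcal{M}(I,\{n_k\},\{c_k\})$ be a homogeneous Moran set. If $\sup_{k\ge1}n_k<+\infty$, then $$\dim_A E=\limsup_{l\to+\infty}\ \sup_{k\ge1}\ \frac{\log (n_{k+1}\cdots n_{k+l})}{-\log (c_{k+1}\cdots c_{k+l})}.$$
   Context: Words: $\Omega_0=\{\emptyset\}$, $\Omega_k=\{\sigma_1\cdots\sigma_k:1\le\sigma_j\le n_j\}$, $\Omega=\bigcup_{k\ge0}\Omega_k$; for $\sigma\in\Omega_{k-1}$ and $1\le i\le n_k$, $\sigma*i\in\Omega_k$ denotes concatenation. A collection $\{I_\sigma:\sigma\in\Omega\}$ of closed intervals is a homogeneous Moran structure if $I_\emptyset=I$; for each $k\ge1$ and $\sigma\in\Omega_{k-1}$, the intervals $I_{\sigma*1},\dots,I_{\sigma*n_k}$ are contained in $I_\sigma$ and have pairwise disjoint interiors; and $|I_{\sigma*i}|/|I_\sigma|=c_k$ for all such $\sigma,i$ ($|\cdot|$ = diameter). The set $E=\bigcap_{k\ge1}\bigcup_{\sigma\in\Omega_k}I_\sigma$ is a homogeneous Moran set, and $\mathcal{M}(I,\{n_k\},\{c_k\})$ is the class of all such sets. For $F\subset\mathbb{R}$, $N_r(A)$ is the smallest number of balls of radius $r$ covering $A$, and the Assouad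 dimension is $\dim_A F=\inf\{s\ge0:\exists\, b,c>0\ \forall\, 0<r<R<b,\ \forall x\in F,\ N_r(B(x,R)\cap F)\le c(R/r)^s\}$. *)

theory Defs
  imports "HOL-Analysis.Analysis" "HOL-Library.Liminf_Limsup"
begin

text \<open>Words of length k: letters sigma_j (j = 1..k) with 1 \<le> sigma_j \<le> n_j.
  A word is a list; its j-th letter (1-based) is the list entry at index j-1.\<close>
definition words :: "(nat \<Rightarrow> nat) \<Rightarrow> nat \<Rightarrow> nat list set" where
  "words n k = {\<sigma>. length \<sigma> = k \<and> (\<forall>j<k. 1 \<le> \<sigma> ! j \<and> \<sigma> ! j \<le> n (Suc j))}"

definition is_closed_interval :: "real set \<Rightarrow> bool" where
  "is_closed_interval S \<longleftrightarrow> (\<exists>a b. a \<le> b \<and> S = {a..b})"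

definition homogeneous_moran_structure ::
  "real set \<Rightarrow> (nat \<Rightarrow> nat) \<Rightarrow> (nat \<Rightarrow> real) \<Rightarrow> (nat list \<Rightarrow> real set) \<Rightarrow> bool" where
  "homogeneous_moran_structure I n c J \<longleftrightarrow>
     J [] = I \<and>
     (\<forall>k. \<forall>\<sigma>\<in>words n k. is_closed_interval (J \<sigma>)) \<and>
     (\<forall>k\<ge>1. \<forall>\<sigma>\<in>words n (k - 1).
        (\<forall>i\<in>{1..n k}. J (\<sigma> @ [i]) \<subseteq> J \<sigma> \<and>
                         diameter (J (\<sigma> @ [i])) / diameter (J \<sigma>) = c k) \<and>
        (\<forall>i\<in>{1..n k}. \<forall>i'\<in>{1..n k}. i \<noteq> i' \<longrightarrow>
            interior (J (\<sigma> @ [i])) \<inter> interior (J (\<sigma> @ [i'])) = {}))"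

definition moran_set :: "(nat \<Rightarrow> nat) \<Rightarrow> (nat list \<Rightarrow> real set) \<Rightarrow> real set" where
  "moran_set n J = (\<Inter>k\<in>{1..}. \<Union>\<sigma>\<in>words n k. J \<sigma>)"

definition moran_class :: "real set \<Rightarrow> (nat \<Rightarrow> nat) \<Rightarrow> (nat \<Rightarrow> real) \<Rightarrow> real set set" where
  "moran_class I n c = {E. \<exists>J. homogeneous_moran_structure I n c J \<and> E = moran_set n J}"

definition covering_number :: "real \<Rightarrow> real set \<Rightarrow> nat" where
  "covering_number r A = Inf {card C | C. finite C \<and> A \<subseteq> (\<Union>x\<in>C. ball x r)}"

definition assouad_dim :: "real set \<Rightarrow> real" where
  "assouad_dim F = Inf {s. s \<ge> 0 \<and> (\<exists>b>0. \<exists>C>0. \<forall>r R. 0 < r \<and> r < R \<and> R < b \<longrightarrow>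
       (\<forall>x\<in>F. real (covering_number r (ball x R \<inter> F)) \<le> C * (R / r) powr s))}"

end

theory Submission
  imports Defs
begin

definition Pr :: "(nat \<Rightarrow> 'a::comm_monoid_mult) \<Rightarrow> nat \<Rightarrow> nat \<Rightarrow> 'a" where
  "Pr f k l = (\<Prod>i\<in>{k+1..k+l}. f i)"

lemma Pr_0[simp]: "Pr f k 0 = 1"
  by (simp add: Pr_def)

lemma Pr_Suc: "Pr f k (Suc l) = Pr f k l * f (k + Suc l)"
proof -
  have "{k+1..k+Suc l} = insert (k + Suc l) {k+1..k+l}" by auto
  then show ?thesis by (simp add: Pr_def mult.commute)
qed

lemma Pr_add: "Pr f k (l1 + l2) = Pr f k l1 * Pr f (k + l1) l2"
  by (induction l2) (simp_all add: Pr_Suc mult.assoc add.assoc)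

lemma Pr_1: "Pr f k 1 = f (Suc k)"
  by (simp add: Pr_def)

definition W :: "(nat \<Rightarrow> nat) \<Rightarrow> nat \<Rightarrow> nat \<Rightarrow> nat list set" where
  "W n k l = {w. length w = l \<and> (\<forall>j<l. 1 \<le> w ! j \<and> w ! j \<le> n (k + 1 + j))}"

lemma words_W: "words n l = W n 0 l"
  by (simp add: words_def W_def)

lemma W_Suc: "W n k (Suc l) = (\<lambda>(w, i). w @ [i]) ` (W n k l \<times> {1..n (k + Suc l)})"
proof (rule set_eqI, rule iffI)
  fix x assume x: "x \<in> W n k (Suc l)"
  then have len: "length x = Suc l" by (simp add: W_def)
  then have xe: "x = butlast x @ [last x]"
    by (metis append_butlast_last_id length_greater_0_conv zero_less_Suc)
  have "butlast x \<in> W n k l"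
    using x len by (auto simp: W_def nth_butlast)
  moreover have "last x \<in> {1..n (k + Suc l)}"
  proof -
    have "1 \<le> x ! l \<and> x ! l \<le> n (k + 1 + l)" using x len by (simp add: W_def)
    moreover have "last x = x ! l" using len
      by (metis diff_Suc_1 last_conv_nth list.size(3) nat.distinct(1))
    ultimately show ?thesis by simp
  qed
  ultimately show "x \<in> (\<lambda>(w, i). w @ [i]) ` (W n k l \<times> {1..n (k + Suc l)})"
    using xe by force
next
  fix x assume "x \<in> (\<lambda>(w, i). w @ [i]) ` (W n k l \<times> {1..n (k + Suc l)})"
  then obtain w i where "x = w @ [i]" "w \<in> W n k l" "i \<in> {1..n (k + Suc l)}" by auto
  then show "x \<in> W n k (Suc l)"
    by (auto simp: W_def nth_append less_Suc_eq)
qed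

lemma W_fin_card: "finite (W n k l) \<and> card (W n k l) = Pr n k l"
proof (induction l)
  case 0
  have "W n k 0 = {[]}" by (auto simp: W_def)
  then show ?case by simp
next
  case (Suc l)
  have inj: "inj_on (\<lambda>(w, i). w @ [i]) (W n k l \<times> {1..n (k + Suc l)})"
    by (auto simp: inj_on_def)
  show ?case using Suc inj
    by (simp add: W_Suc card_image card_cartesian_product Pr_Suc)
qed

lemma words_Suc_iff: "\<tau> \<in> words n (Suc k) \<longleftrightarrow>
   (\<exists>\<sigma> i. \<tau> = \<sigma> @ [i] \<and> \<sigma> \<in> words n k \<and> i \<in> {1..n (Suc k)})"
  using W_Suc[of n 0 k] by (auto simp: words_W)

lemma words_append: "\<sigma> \<in> words n k \<Longrightarrow> w \<in> W n k l \<Longrightarrow> \<sigma> @ w \<in> words n (k + l)"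
proof -
  assume s: "\<sigma> \<in> words n k" and w: "w \<in> W n k l"
  have ls: "length \<sigma> = k" and lw: "length w = l" using s w by (auto simp: words_def W_def)
  have "1 \<le> (\<sigma> @ w) ! j \<and> (\<sigma> @ w) ! j \<le> n (Suc j)" if j: "j < k + l" for j
  proof (cases "j < k")
    case True then show ?thesis using s ls by (simp add: nth_append words_def)
  next
    case False
    then have "j - k < l" using j by simp
    then have "1 \<le> w ! (j - k) \<and> w ! (j - k) \<le> n (k + 1 + (j - k))" using w by (simp add: W_def)
    then show ?thesis using False ls by (simp add: nth_append)
  qed
  then show ?thesis using ls lw by (simp add: words_def)
qed

lemma words_take: "\<tau> \<in> words n (k + l) \<Longrightarrow> take k \<tau> \<in> words n k"
  by (auto simp: words_def)

lemma words_drop: "\<tau> \<in> words n (k + l) \<Longrightarrow> drop k \<tau> \<in> W n k l"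
  by (auto simp: words_def W_def add.commute add.left_commute)

lemma words_0: "words n 0 = {[]}"
  by (auto simp: words_def)

lemma words_ne: "\<forall>k\<ge>1. n k \<ge> 2 \<Longrightarrow> replicate k 1 \<in> words n k"
  by (auto simp: words_def, metis Suc_le_eq le_add2 plus_1_eq_Suc less_imp_le_nat numeral_2_eq_2 le_trans Suc_leI zero_less_Suc)

locale moran =
  fixes n :: "nat \<Rightarrow> nat" and c :: "nat \<Rightarrow> real" and a b :: real and J :: "nat list \<Rightarrow> real set"
  assumes n_ge: "\<forall>k\<ge>1. n k \<ge> 2"
    and c_pos: "\<forall>k\<ge>1. c k > 0"
    and nc_lt: "\<forall>k\<ge>1. real (n k) * c k < 1"
    and ab: "a < b"
    and hms: "homogeneous_moran_structure {a..b} n c J"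
begin

definition L :: "nat \<Rightarrow> real" where "L k = (b - a) * Pr c 0 k"

lemma c_half: "k \<ge> 1 \<Longrightarrow> c k \<le> 1/2"
proof -
  assume k: "k \<ge> 1"
  have "2 * c k \<le> real (n k) * c k"
    using n_ge c_pos k by (intro mult_right_mono) auto
  then show ?thesis using nc_lt k by auto
qed

lemma c_le1: "k \<ge> 1 \<Longrightarrow> c k \<le> 1"
  using c_half by fastforce

lemma cI: "i \<in> {k+1..k+l} \<Longrightarrow> 0 < c i \<and> c i \<le> 1/2"
  using c_pos c_half by auto

lemma Pr_c_pos: "Pr c k l > 0"
  unfolding Pr_def
proof (rule prod_pos)
  fix i assume "i \<in> {k+1..k+l}" then show "0 < c i" using cI[of i k l] by blast
qed

lemma Pr_c_le1: "Pr c k l \<le> 1"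
  unfolding Pr_def
proof (rule prod_le_1)
  fix i assume "i \<in> {k+1..k+l}" then show "0 \<le> c i \<and> c i \<le> 1" using cI[of i k l] by auto
qed

lemma Pr_c_half: "Pr c k l \<le> (1/2) ^ l"
proof -
  have "Pr c k l \<le> (\<Prod>i\<in>{k+1..k+l}. 1/2)"
    unfolding Pr_def
  proof (rule prod_mono)
    fix i assume "i \<in> {k+1..k+l}" then show "0 \<le> c i \<and> c i \<le> 1/2" using cI[of i k l] by auto
  qed
  then show ?thesis by simp
qed

lemma L_pos: "L k > 0"
  using ab Pr_c_pos by (simp add: L_def)

lemma L_0: "L 0 = b - a" by (simp add: L_def)

lemma L_Suc: "L (Suc k) = c (Suc k) * L k"
  using Pr_Suc[of c 0 k] by (simp add: L_def)

lemma L_add: "L (k + l) = L k * Pr c k l"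
  using Pr_add[of c 0 k l] by (simp add: L_def)

lemma L_antimono: "k \<le> m \<Longrightarrow> L m \<le> L k"
  using L_add[of k "m - k"] Pr_c_le1[of k "m-k"] L_pos[of k]
  by (simp add: mult_left_le)

lemma L_strict: "k < m \<Longrightarrow> L m < L k"
proof -
  assume "k < m"
  then have "L m \<le> L (Suc k)" by (intro L_antimono) simp
  also have "\<dots> < L k" using L_Suc[of k] c_half[of "Suc k"] L_pos[of k] by simp
  finally show ?thesis .
qed

lemma L_small: "r > 0 \<Longrightarrow> \<exists>m. L m < r"
proof -
  assume r: "r > 0"
  obtain m where m: "(1/2::real) ^ m < r / (b - a)"
    using real_arch_pow_inv[of "r/(b-a)" "1/2"] r ab by auto
  have "L m \<le> (b - a) * (1/2)^m"
    unfolding L_def using ab Pr_c_half by (intro mult_left_mono) auto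
  also have "\<dots> < r" using m ab by (simp add: field_simps)
  finally show ?thesis by blast
qed

lemma scale: "0 < r \<Longrightarrow> r \<le> L 0 \<Longrightarrow> \<exists>k. L (Suc k) < r \<and> r \<le> L k"
proof -
  assume r: "0 < r" "r \<le> L 0"
  define m where "m = (LEAST m. L m < r)"
  have m: "L m < r" unfolding m_def using L_small[OF r(1)] by (metis LeastI)
  have m0: "m \<noteq> 0"
  proof
    assume "m = 0" then show False using m r by simp
  qed
  have "r \<le> L (m - 1)"
  proof (rule ccontr)
    assume "\<not> r \<le> L (m - 1)"
    then have "m \<le> m - 1" unfolding m_def by (intro Least_le) simp
    then show False using m0 by simp
  qed
  then show ?thesis using m m0 by (intro exI[of _ "m - 1"]) simp
qed

lemma hms_Suc: "\<sigma> \<in> words n k \<Longrightarrow>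
        (\<forall>i\<in>{1..n (Suc k)}. J (\<sigma> @ [i]) \<subseteq> J \<sigma> \<and>
                         diameter (J (\<sigma> @ [i])) / diameter (J \<sigma>) = c (Suc k)) \<and>
        (\<forall>i\<in>{1..n (Suc k)}. \<forall>i'\<in>{1..n (Suc k)}. i \<noteq> i' \<longrightarrow>
            interior (J (\<sigma> @ [i])) \<inter> interior (J (\<sigma> @ [i'])) = {})"
proof -
  assume s: "\<sigma> \<in> words n k"
  have "\<forall>k\<ge>1. \<forall>\<sigma>\<in>words n (k - 1).
        (\<forall>i\<in>{1..n k}. J (\<sigma> @ [i]) \<subseteq> J \<sigma> \<and>
                         diameter (J (\<sigma> @ [i])) / diameter (J \<sigma>) = c k) \<and>
        (\<forall>i\<in>{1..n k}. \<forall>i'\<in>{1..n k}. i \<noteq> i' \<longrightarrow>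
            interior (J (\<sigma> @ [i])) \<inter> interior (J (\<sigma> @ [i'])) = {})"
    using hms unfolding homogeneous_moran_structure_def by blast
  from spec[OF this, of "Suc k"] s show ?thesis by simp
qed

lemma struct: "\<sigma> \<in> words n k \<Longrightarrow> i \<in> {1..n (Suc k)} \<Longrightarrow>
   J (\<sigma> @ [i]) \<subseteq> J \<sigma> \<and> diameter (J (\<sigma> @ [i])) / diameter (J \<sigma>) = c (Suc k)"
  using hms_Suc by blast

lemma struct_disj: "\<sigma> \<in> words n k \<Longrightarrow> i \<in> {1..n (Suc k)} \<Longrightarrow> i' \<in> {1..n (Suc k)} \<Longrightarrow> i \<noteq> i' \<Longrightarrow>
   interior (J (\<sigma> @ [i])) \<inter> interior (J (\<sigma> @ [i'])) = {}"
  using hms_Suc by blast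

lemma closed_int: "\<sigma> \<in> words n k \<Longrightarrow> \<exists>p q. p \<le> q \<and> J \<sigma> = {p..q}"
  using hms unfolding homogeneous_moran_structure_def is_closed_interval_def by blast

lemma diam: "\<sigma> \<in> words n k \<Longrightarrow> diameter (J \<sigma>) = L k"
proof (induction k arbitrary: \<sigma>)
  case 0
  then have "\<sigma> = []" by (simp add: words_0)
  then show ?case using hms ab by (simp add: homogeneous_moran_structure_def L_0)
next
  case (Suc k)
  then obtain \<rho> i where r: "\<sigma> = \<rho> @ [i]" "\<rho> \<in> words n k" "i \<in> {1..n (Suc k)}"
    by (auto simp: words_Suc_iff)
  have "diameter (J \<rho>) = L k" using Suc.IH r by simp
  then show ?case using struct[OF r(2,3)] L_pos[of k] r(1) L_Suc[of k]
    by (simp add: field_simps)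
qed

lemma shape: "\<sigma> \<in> words n k \<Longrightarrow> J \<sigma> = {Inf (J \<sigma>) .. Inf (J \<sigma>) + L k}"
proof -
  assume s: "\<sigma> \<in> words n k"
  obtain p q where pq: "p \<le> q" "J \<sigma> = {p..q}" using closed_int[OF s] by blast
  have "q - p = L k" using diam[OF s] pq by simp
  then show ?thesis using pq by simp
qed

lemma prefix: "\<tau> \<in> words n (j + l) \<Longrightarrow> J \<tau> \<subseteq> J (take j \<tau>)"
proof (induction l arbitrary: \<tau>)
  case 0
  then show ?case by (simp add: words_def)
next
  case (Suc l)
  then obtain \<rho> i where r: "\<tau> = \<rho> @ [i]" "\<rho> \<in> words n (j + l)" "i \<in> {1..n (Suc (j + l))}"
    by (auto simp: words_Suc_iff)
  have lr: "length \<rho> = j + l" using r(2) by (simp add: words_def)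
  have "J \<tau> \<subseteq> J \<rho>" using struct[OF r(2,3)] r(1) by simp
  also have "\<dots> \<subseteq> J (take j \<rho>)" using Suc.IH[OF r(2)] .
  also have "take j \<rho> = take j \<tau>" using r(1) lr by simp
  finally show ?case .
qed

lemma disj: "\<sigma> \<in> words n k \<Longrightarrow> \<tau> \<in> words n k \<Longrightarrow> \<sigma> \<noteq> \<tau> \<Longrightarrow>
   interior (J \<sigma>) \<inter> interior (J \<tau>) = {}"
proof (induction k arbitrary: \<sigma> \<tau>)
  case 0
  then show ?case by (simp add: words_0)
next
  case (Suc k)
  obtain \<rho> i where r: "\<sigma> = \<rho> @ [i]" "\<rho> \<in> words n k" "i \<in> {1..n (Suc k)}"
    using Suc.prems by (auto simp: words_Suc_iff)
  obtain \<rho>' i' where r': "\<tau> = \<rho>' @ [i']" "\<rho>' \<in> words n k" "i' \<in> {1..n (Suc k)}"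
    using Suc.prems by (auto simp: words_Suc_iff)
  show ?case
  proof (cases "\<rho> = \<rho>'")
    case True
    then have ii: "i \<noteq> i'" using Suc.prems r r' by auto
    show ?thesis using struct_disj[OF r(2,3) r'(3) ii] r r' True by simp
  next
    case False
    have "interior (J \<rho>) \<inter> interior (J \<rho>') = {}" using Suc.IH[OF r(2) r'(2) False] .
    moreover have "interior (J \<sigma>) \<subseteq> interior (J \<rho>)"
      using struct[OF r(2,3)] r(1) by (simp add: interior_mono)
    moreover have "interior (J \<tau>) \<subseteq> interior (J \<rho>')"
      using struct[OF r'(2,3)] r'(1) by (simp add: interior_mono)
    ultimately show ?thesis by blast
  qed
qed

lemma sep: "\<sigma> \<in> words n k \<Longrightarrow> \<tau> \<in> words n k \<Longrightarrow> \<sigma> \<noteq> \<tau> \<Longrightarrow>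
   L k \<le> \<bar>Inf (J \<sigma>) - Inf (J \<tau>)\<bar>"
proof (rule ccontr)
  assume s: "\<sigma> \<in> words n k" and t: "\<tau> \<in> words n k" and ne: "\<sigma> \<noteq> \<tau>"
    and c: "\<not> L k \<le> \<bar>Inf (J \<sigma>) - Inf (J \<tau>)\<bar>"
  define p where "p = Inf (J \<sigma>)"
  define q where "q = Inf (J \<tau>)"
  have "interior (J \<sigma>) = {p<..<p + L k}" using shape[OF s] p_def
    by (metis interior_atLeastAtMost_real)
  moreover have "interior (J \<tau>) = {q<..<q + L k}" using shape[OF t] q_def
    by (metis interior_atLeastAtMost_real)
  moreover have "(p + q + L k) / 2 \<in> {p<..<p + L k} \<inter> {q<..<q + L k}"
  proof -
    have "\<bar>p - q\<bar> < L k" using c unfolding p_def q_def by simp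
    then show ?thesis by (auto simp: abs_less_iff)
  qed
  ultimately show False using disj[OF s t ne] by blast
qed

lemma count: "T \<subseteq> words n k \<Longrightarrow> (\<forall>\<tau>\<in>T. Inf (J \<tau>) \<in> {u<..<u+h}) \<Longrightarrow> h \<le> real j * L k \<Longrightarrow>
   card T \<le> j"
proof -
  assume T: "T \<subseteq> words n k" and in_int: "\<forall>\<tau>\<in>T. Inf (J \<tau>) \<in> {u<..<u+h}"
    and h: "h \<le> real j * L k"
  define f where "f \<tau> = nat \<lfloor>(Inf (J \<tau>) - u) / L k\<rfloor>" for \<tau>
  have Lp: "L k > 0" by (rule L_pos)
  have inj: "inj_on f T"
  proof (rule inj_onI)
    fix \<sigma> \<tau> assume s: "\<sigma> \<in> T" and t: "\<tau> \<in> T" and eq: "f \<sigma> = f \<tau>"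
    have ps: "(Inf (J \<sigma>) - u) / L k > 0" "(Inf (J \<tau>) - u) / L k > 0"
      using in_int s t Lp by auto
    then have "\<lfloor>(Inf (J \<sigma>) - u) / L k\<rfloor> = \<lfloor>(Inf (J \<tau>) - u) / L k\<rfloor>"
      using eq unfolding f_def by (metis eq_nat_nat_iff floor_less_zero not_less less_imp_le)
    then have "\<bar>(Inf (J \<sigma>) - u) / L k - (Inf (J \<tau>) - u) / L k\<bar> < 1"
      by linarith
    then have "\<bar>Inf (J \<sigma>) - Inf (J \<tau>)\<bar> < L k"
      using Lp by (simp add: diff_divide_distrib[symmetric] abs_divide field_simps)
    then show "\<sigma> = \<tau>" using sep[of \<sigma> k \<tau>] s t T by force
  qed
  have img: "f ` T \<subseteq> {..<j}"
  proof
    fix z assume "z \<in> f ` T"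
    then obtain \<tau> where t: "\<tau> \<in> T" "z = f \<tau>" by auto
    have "(Inf (J \<tau>) - u) / L k < real j"
      using in_int t h Lp by (auto simp: field_simps)
    moreover have "(Inf (J \<tau>) - u) / L k > 0" using in_int t Lp by auto
    ultimately show "z \<in> {..<j}" using t unfolding f_def
      by (simp add: nat_less_iff floor_less_iff)
  qed
  have "card T \<le> card {..<j}" by (rule card_inj_on_le[OF inj img]) simp
  then show "card T \<le> j" by simp
qed

definition E where "E = moran_set n J"

lemma E_sub: "k \<ge> 1 \<Longrightarrow> E \<subseteq> (\<Union>\<sigma>\<in>words n k. J \<sigma>)"
  unfolding E_def moran_set_def by auto

lemma nonempty: "\<sigma> \<in> words n k \<Longrightarrow> \<exists>y\<in>E. y \<in> J \<sigma>"
proof -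
  assume s: "\<sigma> \<in> words n k"
  define F where "F m = J (\<sigma> @ replicate m 1)" for m
  have rw: "\<sigma> @ replicate m 1 \<in> words n (k + m)" for m
    using words_append[OF s, of "replicate m 1" m] n_ge
    by (auto simp: W_def) (metis Suc_le_eq le_add2 numeral_2_eq_2 le_trans Suc_leI zero_less_Suc add_Suc_right add_Suc)
  have cF: "compact (F m)" for m
    using shape[OF rw[of m]] unfolding F_def by (metis compact_Icc)
  have neF: "F m \<noteq> {}" for m
    using shape[OF rw[of m]] L_pos[of "k+m"] unfolding F_def
    by (metis atLeastAtMost_iff add_increasing2 empty_iff less_le order_refl)
  have monoF: "F m' \<subseteq> F m" if "m \<le> m'" for m m'
  proof -
    have "J (\<sigma> @ replicate m' 1) \<subseteq> J (take (k + m) (\<sigma> @ replicate m' 1))"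
      using prefix[of "\<sigma> @ replicate m' 1" "k + m" "m' - m"] rw[of m'] that by simp
    also have "take (k + m) (\<sigma> @ replicate m' 1) = \<sigma> @ replicate m 1"
      using s that by (simp add: words_def)
    finally show ?thesis unfolding F_def .
  qed
  obtain y where y: "y \<in> \<Inter>(range F)" using compact_nest[of F, OF cF neF monoF] by blast
  have "y \<in> E"
    unfolding E_def moran_set_def
  proof (rule INT_I)
    fix j assume "j \<in> {1::nat..}"
    define S where "S = (\<Union>\<sigma>\<in>words n j. J \<sigma>)"
    have w: "\<sigma> @ replicate j 1 \<in> words n (j + k)" using rw[of j] by (simp add: add.commute)
    have "y \<in> J (\<sigma> @ replicate j 1)" using y unfolding F_def by auto
    then have "y \<in> J (take j (\<sigma> @ replicate j 1))" using prefix[OF w] by auto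
    then show "y \<in> (\<Union>\<sigma>\<in>words n j. J \<sigma>)" using words_take[OF w] by blast
  qed
  moreover have "y \<in> J \<sigma>" using y unfolding F_def by (metis (no_types) INT_E UNIV_I append_Nil2 replicate_0)
  ultimately show ?thesis by blast
qed

end

context moran
begin

lemma words_fin: "finite (words n k)"
  using W_fin_card[of n 0 k] by (simp add: words_W)

lemma cover_exists: "1 \<le> m \<Longrightarrow> L m < r \<Longrightarrow> A \<subseteq> E \<Longrightarrow> T \<subseteq> words n m \<Longrightarrow>
   (\<forall>\<tau>\<in>words n m. J \<tau> \<inter> A \<noteq> {} \<longrightarrow> \<tau> \<in> T) \<Longrightarrow>
   \<exists>C. finite C \<and> card C \<le> card T \<and> A \<subseteq> (\<Union>x\<in>C. ball x r)"
proof -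
  assume m: "1 \<le> m" and Lm: "L m < r" and A: "A \<subseteq> E" and T: "T \<subseteq> words n m"
    and Tall: "\<forall>\<tau>\<in>words n m. J \<tau> \<inter> A \<noteq> {} \<longrightarrow> \<tau> \<in> T"
  have fT: "finite T" using T words_fin finite_subset by blast
  define C where "C = (\<lambda>\<tau>. Inf (J \<tau>) + L m / 2) ` T"
  have "A \<subseteq> (\<Union>x\<in>C. ball x r)"
  proof
    fix y assume y: "y \<in> A"
    then obtain \<tau> where t: "\<tau> \<in> words n m" "y \<in> J \<tau>" using E_sub[OF m] A by blast
    then have tT: "\<tau> \<in> T" using Tall y by blast
    have "y \<in> {Inf (J \<tau>) .. Inf (J \<tau>) + L m}" using shape[OF t(1)] t(2) by simp
    then have "dist (Inf (J \<tau>) + L m / 2) y < r" using Lm L_pos[of m]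
      by (auto simp: dist_real_def abs_if)
    then show "y \<in> (\<Union>x\<in>C. ball x r)" using tT unfolding C_def by force
  qed
  moreover have "finite C" "card C \<le> card T" using fT unfolding C_def by (auto intro: card_image_le)
  ultimately show ?thesis by blast
qed

lemma covnum_le: "finite C \<Longrightarrow> A \<subseteq> (\<Union>x\<in>C. ball x r) \<Longrightarrow> covering_number r A \<le> card C"
  unfolding covering_number_def by (rule cInf_lower) (auto intro: bdd_belowI[of _ 0])

lemma covnum_attained: "(\<exists>C. finite C \<and> A \<subseteq> (\<Union>x\<in>C. ball x r)) \<Longrightarrow>
   \<exists>C. finite C \<and> A \<subseteq> (\<Union>x\<in>C. ball x r) \<and> card C = covering_number r A"
proof -
  assume "\<exists>C. finite C \<and> A \<subseteq> (\<Union>x\<in>C. ball x r)"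
  then have ne: "{card C | C. finite C \<and> A \<subseteq> (\<Union>x\<in>C. ball x r)} \<noteq> {}" by blast
  have "covering_number r A \<in> {card C | C. finite C \<and> A \<subseteq> (\<Union>x\<in>C. ball x r)}"
    unfolding covering_number_def by (rule Inf_nat_def1[OF ne])
  then show ?thesis by auto
qed

lemma covnum_ge: "(\<exists>C. finite C \<and> A \<subseteq> (\<Union>x\<in>C. ball x r)) \<Longrightarrow>
   (\<And>C. finite C \<Longrightarrow> A \<subseteq> (\<Union>x\<in>C. ball x r) \<Longrightarrow> M \<le> card C) \<Longrightarrow> M \<le> covering_number r A"
  unfolding covering_number_def by (rule cInf_greatest) auto


lemma Pr_n_le: "\<forall>i\<ge>1. n i \<le> N \<Longrightarrow> Pr n k l \<le> N ^ l"
proof -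
  assume Nb: "\<forall>i\<ge>1. n i \<le> N"
  have "Pr n k l \<le> (\<Prod>i\<in>{k+1..k+l}. N)" unfolding Pr_def
    using Nb by (intro prod_mono) auto
  then show ?thesis by simp
qed

lemma Pr_n_pos: "Pr n k l \<ge> 1"
  unfolding Pr_def
proof (rule prod_ge_1)
  fix i assume "i \<in> {k+1..k+l}" then have "i \<ge> 1" by simp
  then show "1 \<le> n i" using n_ge by fastforce
qed

lemma Pr_1': "Pr f k (Suc 0) = f (Suc k)"
  by (simp add: Pr_def)

lemma meets_int: "\<rho> \<in> words n k \<Longrightarrow> J \<rho> \<inter> ball x R \<noteq> {} \<Longrightarrow>
   Inf (J \<rho>) \<in> {x - R - L k <..< x - R - L k + (2 * R + L k)}"
proof -
  assume r: "\<rho> \<in> words n k" and m: "J \<rho> \<inter> ball x R \<noteq> {}"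
  then obtain z where z: "z \<in> J \<rho>" "dist x z < R" by auto
  have "z \<in> {Inf (J \<rho>) .. Inf (J \<rho>) + L k}" using shape[OF r] z by simp
  then show ?thesis using z(2) by (auto simp: dist_real_def abs_less_iff)
qed

lemma upper:
  fixes N :: nat and K0 s r R x :: real
  assumes Nb: "\<forall>i\<ge>1. n i \<le> N" and N1: "N \<ge> 1"
    and star: "\<forall>k\<ge>1. \<forall>l. real (Pr n k l) \<le> K0 * (Pr c k l) powr (-s)"
    and s: "s \<ge> 0" and K0: "K0 \<ge> 1" and x: "x \<in> E" and r: "0 < r" "r < R" and R: "R \<le> L 0"
  shows "real (covering_number r (ball x R \<inter> E)) \<le> 3 * real N ^ 2 * K0 * (R / r) powr s"
proof -
  obtain k where k: "L (Suc k) < R" "R \<le> L k" using scale[of R] r R by auto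
  obtain m where m: "L (Suc m) < r" "r \<le> L m" using scale[of r] r R by auto
  have km: "k \<le> m"
  proof (rule ccontr)
    assume "\<not> k \<le> m"
    then have "L k \<le> L (Suc m)" by (intro L_antimono) simp
    then show False using k m r by simp
  qed
  define S where "S = {\<rho>\<in>words n k. J \<rho> \<inter> ball x R \<noteq> {}}"
  define T where "T = {\<tau>\<in>words n (Suc m). J \<tau> \<inter> (ball x R \<inter> E) \<noteq> {}}"
  have cS: "card S \<le> 3"
  proof (rule count[of S k "x - R - L k" "2 * R + L k"])
    show "S \<subseteq> words n k" unfolding S_def by auto
    show "\<forall>\<tau>\<in>S. Inf (J \<tau>) \<in> {x - R - L k<..<x - R - L k + (2 * R + L k)}"
      unfolding S_def using meets_int by blast
    show "2 * R + L k \<le> real 3 * L k" using k by simp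
  qed
  have fS: "finite S" unfolding S_def using words_fin by auto
  have fW: "finite (W n k (Suc m - k))" and cW: "card (W n k (Suc m - k)) = Pr n k (Suc m - k)"
    using W_fin_card by auto
  have TS: "T \<subseteq> (\<lambda>(\<rho>, w). \<rho> @ w) ` (S \<times> W n k (Suc m - k))"
  proof
    fix \<tau> assume t: "\<tau> \<in> T"
    then have tw: "\<tau> \<in> words n (k + (Suc m - k))" using km unfolding T_def by simp
    have "J \<tau> \<subseteq> J (take k \<tau>)" using prefix[OF tw] .
    then have "take k \<tau> \<in> S" using t words_take[OF tw] unfolding T_def S_def by blast
    moreover have "drop k \<tau> \<in> W n k (Suc m - k)" using words_drop[OF tw] .
    ultimately show "\<tau> \<in> (\<lambda>(\<rho>, w). \<rho> @ w) ` (S \<times> W n k (Suc m - k))"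
      by (intro image_eqI[of _ _ "(take k \<tau>, drop k \<tau>)"]) auto
  qed
  have cT: "card T \<le> 3 * Pr n k (Suc m - k)"
  proof -
    have "card T \<le> card ((\<lambda>(\<rho>, w). \<rho> @ w) ` (S \<times> W n k (Suc m - k)))"
      using TS fS fW by (intro card_mono) auto
    also have "\<dots> \<le> card (S \<times> W n k (Suc m - k))" by (rule card_image_le) (use fS fW in auto)
    also have "\<dots> = card S * Pr n k (Suc m - k)" using cW by (simp add: card_cartesian_product)
    also have "\<dots> \<le> 3 * Pr n k (Suc m - k)" using cS by simp
    finally show ?thesis .
  qed
  obtain C where C: "finite C" "card C \<le> card T" "ball x R \<inter> E \<subseteq> (\<Union>x\<in>C. ball x r)"
    using cover_exists[of "Suc m" r "ball x R \<inter> E" T] m unfolding T_def by auto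
  have cov: "covering_number r (ball x R \<inter> E) \<le> 3 * Pr n k (Suc m - k)"
    using covnum_le[OF C(1) C(3)] C(2) cT by linarith
  have Rr: "(R / r) powr s \<ge> 1" using r s by (intro ge_one_powr_ge_zero) auto
  have N1r: "real N \<ge> 1" using N1 by simp
  have main: "real (Pr n k (Suc m - k)) \<le> real N ^ 2 * K0 * (R / r) powr s"
  proof (cases "m = k")
    case True
    have "real (Pr n k (Suc m - k)) = real (n (Suc k))" using True by (simp add: Pr_1')
    also have "\<dots> \<le> real N" using Nb by simp
    also have "\<dots> \<le> real N ^ 2 * 1 * 1" using N1r by (simp add: power2_eq_square)
    also have "\<dots> \<le> real N ^ 2 * K0 * (R / r) powr s"
      using K0 Rr by (intro mult_mono) auto
    finally show ?thesis .
  next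
    case False
    define l where "l = m - Suc k"
    have ml: "Suc m - k = 1 + l + 1" "m = Suc k + l" using False km unfolding l_def by auto
    have "Pr n k (Suc m - k) = Pr n k 1 * Pr n (Suc k) l * Pr n (Suc k + l) 1"
      unfolding ml(1) using Pr_add[of n k "1 + l" 1] Pr_add[of n k 1 l] by simp
    also have "\<dots> = n (Suc k) * Pr n (Suc k) l * n (Suc m)" by (simp add: Pr_1' ml(2))
    finally have "real (Pr n k (Suc m - k)) = real (n (Suc k)) * real (Pr n (Suc k) l) * real (n (Suc m))"
      by simp
    also have "\<dots> \<le> real N * (K0 * (Pr c (Suc k) l) powr (-s)) * real N"
      using Nb star K0 by (intro mult_mono) auto
    also have "(Pr c (Suc k) l) powr (-s) = (L (Suc k) / L m) powr s"
    proof -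
      have "L m = L (Suc k) * Pr c (Suc k) l" using L_add[of "Suc k" l] ml(2) by simp
      then have "Pr c (Suc k) l = L m / L (Suc k)" using L_pos[of "Suc k"] by (simp add: field_simps)
      then show ?thesis using L_pos[of m] L_pos[of "Suc k"]
        by (simp add: powr_minus_divide powr_divide)
    qed
    also have "(L (Suc k) / L m) powr s \<le> (R / r) powr s"
    proof (rule powr_mono2[OF s])
      show "0 \<le> L (Suc k) / L m" using L_pos[of m] L_pos[of "Suc k"] by simp
      show "L (Suc k) / L m \<le> R / r"
        using k m r L_pos[of m] L_pos[of "Suc k"] by (simp add: frac_le)
    qed
    then have "real N * (K0 * (L (Suc k) / L m) powr s) * real N \<le> real N * (K0 * (R / r) powr s) * real N"
      using K0 by (intro mult_mono) auto
    finally show ?thesis by (simp add: power2_eq_square mult_ac)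
  qed
  have "real (covering_number r (ball x R \<inter> E)) \<le> 3 * real (Pr n k (Suc m - k))"
    using cov by (metis of_nat_le_iff of_nat_mult of_nat_numeral)
  also have "\<dots> \<le> 3 * real N ^ 2 * K0 * (R / r) powr s" using main by simp
  finally show ?thesis .
qed


lemma powr_neg_anti: "0 < (x::real) \<Longrightarrow> x \<le> y \<Longrightarrow> 0 \<le> s \<Longrightarrow> y powr (-s) \<le> x powr (-s)"
proof -
  assume a: "0 < x" "x \<le> y" "0 \<le> s"
  have "x powr s \<le> y powr s" using a by (simp add: powr_mono2)
  moreover have "0 < x powr s" using a by simp
  ultimately show ?thesis by (simp add: powr_minus le_imp_inverse_le)
qed

lemma lower:
  fixes N :: nat and s b0 C :: real
  assumes Nb: "\<forall>i\<ge>1. n i \<le> N" and N1: "N \<ge> 1" and s: "s \<ge> 0" and b0: "b0 > 0" and C: "C > 0"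
    and adm: "\<forall>r R. 0 < r \<and> r < R \<and> R < b0 \<longrightarrow>
       (\<forall>x\<in>E. real (covering_number r (ball x R \<inter> E)) \<le> C * (R / r) powr s)"
  shows "\<exists>k0. \<forall>k l. k0 \<le> l \<longrightarrow>
     real (Pr n k l) \<le> real N ^ k0 * (2 * C * 4 powr s) * (Pr c k l) powr (-s)"
proof -
  obtain k0 where k0: "L k0 < b0 / 2" using L_small[of "b0/2"] b0 by auto
  have "real (Pr n k l) \<le> real N ^ k0 * (2 * C * 4 powr s) * (Pr c k l) powr (-s)"
    if l: "k0 \<le> l" for k l
  proof -
    define k' where "k' = max k k0"
    define l' where "l' = k + l - k'"
    have kk: "k + (k' - k) = k'" "k' + l' = k + l" "k' - k \<le> k0" "k0 \<le> k'"
      using l unfolding k'_def l'_def by auto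
    define \<sigma> where "\<sigma> = replicate k' (1::nat)"
    have sw: "\<sigma> \<in> words n k'" unfolding \<sigma>_def by (rule words_ne[OF n_ge])
    obtain x where x: "x \<in> E" "x \<in> J \<sigma>" using nonempty[OF sw] by blast
    define R where "R = 2 * L k'"
    define r where "r = L (k' + l') / 2"
    have rpos: "0 < r" unfolding r_def using L_pos by simp
    have rR: "r < R" unfolding r_def R_def using L_antimono[of k' "k' + l'"] L_pos[of k'] by simp
    have Rb: "R < b0" unfolding R_def using L_antimono[OF kk(4)] k0 by simp
    define Ws where "Ws = W n k' l'"
    have fWs: "finite Ws" and cWs: "card Ws = Pr n k' l'" using W_fin_card unfolding Ws_def by auto
    have cnt: "Pr n k' l' \<le> 2 * covering_number r (ball x R \<inter> E)"
    proof -
      obtain m where m: "L m < r" using L_small rpos by blast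
      have "L (Suc m) < r" using L_antimono[of m "Suc m"] m by simp
      then have "\<exists>C. finite C \<and> ball x R \<inter> E \<subseteq> (\<Union>x\<in>C. ball x r)"
        using cover_exists[of "Suc m" r "ball x R \<inter> E" "words n (Suc m)"] by auto
      from covnum_attained[OF this] obtain Cv where Cv: "finite Cv" "ball x R \<inter> E \<subseteq> (\<Union>x\<in>Cv. ball x r)"
         "card Cv = covering_number r (ball x R \<inter> E)" by blast
      define F where "F z = {w\<in>Ws. J (\<sigma> @ w) \<inter> ball z r \<noteq> {}}" for z
      have sub: "Ws \<subseteq> (\<Union>z\<in>Cv. F z)"
      proof
        fix w assume w: "w \<in> Ws"
        have tw: "\<sigma> @ w \<in> words n (k' + l')" using words_append[OF sw] w unfolding Ws_def by blast
        obtain y where y: "y \<in> E" "y \<in> J (\<sigma> @ w)" using nonempty[OF tw] by blast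
        have "take k' (\<sigma> @ w) = \<sigma>" unfolding \<sigma>_def by simp
        then have "y \<in> J \<sigma>" using prefix[OF tw] y by auto
        moreover have "J \<sigma> = {Inf (J \<sigma>)..Inf (J \<sigma>) + L k'}" using shape[OF sw] .
        ultimately have "y \<in> {Inf (J \<sigma>)..Inf (J \<sigma>) + L k'}" "x \<in> {Inf (J \<sigma>)..Inf (J \<sigma>) + L k'}"
          using x by auto
        then have "dist x y \<le> L k'" by (auto simp: dist_real_def abs_le_iff)
        then have "y \<in> ball x R \<inter> E" using y L_pos[of k'] unfolding R_def by auto
        then obtain z where "z \<in> Cv" "y \<in> ball z r" using Cv by blast
        then show "w \<in> (\<Union>z\<in>Cv. F z)" using w y unfolding F_def by blast
      qed
      have cF: "card (F z) \<le> 2" for z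
      proof -
        have inj: "inj_on (\<lambda>w. \<sigma> @ w) (F z)" by (auto simp: inj_on_def)
        have "card ((\<lambda>w. \<sigma> @ w) ` F z) \<le> 2"
        proof (rule count[of _ "k' + l'" "z - r - L (k' + l')" "2 * r + L (k' + l')"])
          show "(\<lambda>w. \<sigma> @ w) ` F z \<subseteq> words n (k' + l')"
            using words_append[OF sw] unfolding F_def Ws_def by blast
          show "\<forall>\<tau>\<in>(\<lambda>w. \<sigma> @ w) ` F z. Inf (J \<tau>) \<in> {z - r - L (k' + l')<..<z - r - L (k' + l') + (2 * r + L (k' + l'))}"
          proof
            fix \<tau> assume "\<tau> \<in> (\<lambda>w. \<sigma> @ w) ` F z"
            then obtain w where "w \<in> F z" "\<tau> = \<sigma> @ w" by auto
            then show "Inf (J \<tau>) \<in> {z - r - L (k' + l')<..<z - r - L (k' + l') + (2 * r + L (k' + l'))}"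
              using meets_int[of \<tau> "k' + l'" z r] words_append[OF sw] unfolding F_def Ws_def by blast
          qed
          show "2 * r + L (k' + l') \<le> real 2 * L (k' + l')" unfolding r_def by simp
        qed
        then show ?thesis using card_image[OF inj] by simp
      qed
      have "card Ws \<le> card (\<Union>z\<in>Cv. F z)"
        using sub Cv(1) fWs unfolding F_def by (intro card_mono) auto
      also have "\<dots> \<le> (\<Sum>z\<in>Cv. card (F z))" by (rule card_UN_le[OF Cv(1)])
      also have "\<dots> \<le> (\<Sum>z\<in>Cv. 2)" using cF by (intro sum_mono) auto
      also have "\<dots> = 2 * card Cv" by simp
      finally show ?thesis using cWs Cv(3) by simp
    qed
    have P1: "real (Pr n k' l') \<le> 2 * C * 4 powr s * (Pr c k' l') powr (-s)"
    proof -
      have "real (Pr n k' l') \<le> 2 * real (covering_number r (ball x R \<inter> E))"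
        using cnt by (metis of_nat_le_iff of_nat_mult of_nat_numeral)
      also have "\<dots> \<le> 2 * (C * (R / r) powr s)" using adm rpos rR Rb x(1) by auto
      also have "R / r = 4 / Pr c k' l'"
      proof -
        have "L (k' + l') = L k' * Pr c k' l'" by (rule L_add)
        then show ?thesis unfolding R_def r_def using L_pos[of k'] Pr_c_pos[of k' l']
          by (simp add: field_simps)
      qed
      also have "(4 / Pr c k' l') powr s = 4 powr s * (Pr c k' l') powr (-s)"
        using Pr_c_pos[of k' l'] by (simp add: powr_divide powr_minus_divide)
      finally show ?thesis by (simp add: mult_ac)
    qed
    have "Pr n k l = Pr n k (k' - k) * Pr n k' l'"
      using Pr_add[of n k "k' - k" l'] kk by simp
    then have "real (Pr n k l) = real (Pr n k (k' - k)) * real (Pr n k' l')" by simp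
    also have "\<dots> \<le> real N ^ k0 * (2 * C * 4 powr s * (Pr c k' l') powr (-s))"
    proof (rule mult_mono[OF _ P1])
      have "Pr n k (k' - k) \<le> N ^ (k' - k)" by (rule Pr_n_le[OF Nb])
      also have "\<dots> \<le> N ^ k0" using N1 kk(3) by (intro power_increasing) auto
      finally show "real (Pr n k (k' - k)) \<le> real N ^ k0" by (metis of_nat_le_iff of_nat_power)
    qed auto
    also have "(Pr c k' l') powr (-s) \<le> (Pr c k l) powr (-s)"
    proof (rule powr_neg_anti[OF Pr_c_pos _ s])
      have "Pr c k l = Pr c k (k' - k) * Pr c k' l'" using Pr_add[of c k "k' - k" l'] kk by simp
      then show "Pr c k l \<le> Pr c k' l'"
        using Pr_c_le1[of k "k' - k"] Pr_c_pos[of k' l'] by (simp add: mult_le_cancel_right1)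
    qed
    then have "real N ^ k0 * (2 * C * 4 powr s * (Pr c k' l') powr (-s)) \<le>
        real N ^ k0 * (2 * C * 4 powr s * (Pr c k l) powr (-s))"
      using C by (intro mult_left_mono) auto
    finally show ?thesis by (simp add: mult_ac)
  qed
  then show ?thesis by blast
qed

end

lemma lim_aux: "((\<lambda>l. s + K / (real l * ln 2)) \<longlongrightarrow> (s::real)) sequentially"
proof -
  have "((\<lambda>l. (K / ln 2) * inverse (real l)) \<longlongrightarrow> (K / ln 2) * 0) sequentially"
    by (intro tendsto_mult tendsto_const lim_inverse_n)
  then have "((\<lambda>l. s + (K / ln 2) * inverse (real l)) \<longlongrightarrow> s + 0) sequentially"
    by (intro tendsto_add tendsto_const) simp
  then show ?thesis by (simp add: divide_inverse mult_ac)
qed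

context moran
begin

definition Rt :: "nat \<Rightarrow> nat \<Rightarrow> real" where
  "Rt k l = ln (real (Pr n k l)) / - ln (Pr c k l)"

lemma num_le_den: "ln (real (Pr n k l)) \<le> - ln (Pr c k l)"
proof -
  have "real (Pr n k l) * Pr c k l = (\<Prod>i\<in>{k+1..k+l}. real (n i) * c i)"
    unfolding Pr_def by (simp add: prod.distrib)
  also have "\<dots> \<le> 1"
  proof (rule prod_le_1)
    fix i assume i: "i \<in> {k+1..k+l}"
    then have "i \<ge> 1" by simp
    then show "0 \<le> real (n i) * c i \<and> real (n i) * c i \<le> 1"
      using nc_lt c_pos by (auto intro: less_imp_le)
  qed
  finally have "ln (real (Pr n k l) * Pr c k l) \<le> 0"
    using Pr_c_pos[of k l] Pr_n_pos[of k l] by simp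
  then show ?thesis using Pr_c_pos[of k l] Pr_n_pos[of k l] by (simp add: ln_mult)
qed

lemma den_ge: "- ln (Pr c k l) \<ge> real l * ln 2"
proof -
  have "ln (Pr c k l) \<le> ln ((1/2) ^ l)" using Pr_c_half Pr_c_pos by simp
  also have "\<dots> = - (real l * ln 2)" by (simp add: ln_realpow ln_div)
  finally show ?thesis by simp
qed

lemma Rt_bounds: "0 \<le> Rt k l \<and> Rt k l \<le> 1"
proof -
  have num: "0 \<le> ln (real (Pr n k l))" using Pr_n_pos[of k l] by simp
  have den: "0 \<le> - ln (Pr c k l)" using Pr_c_le1[of k l] Pr_c_pos[of k l] by simp
  have "Rt k l \<le> 1"
  proof (cases "- ln (Pr c k l) = 0")
    case True then show ?thesis by (simp add: Rt_def)
  next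
    case False
    then have pos: "0 < - ln (Pr c k l)" using den by linarith
    show ?thesis unfolding Rt_def by (rule iffD2[OF divide_le_eq_1_pos[OF pos] num_le_den])
  qed
  moreover have "0 \<le> Rt k l" unfolding Rt_def using num den by (rule divide_nonneg_nonneg)
  ultimately show ?thesis by simp
qed

definition f :: "nat \<Rightarrow> real" where "f l = (SUP k\<in>{1..}. Rt k l)"

lemma bddRt: "bdd_above ((\<lambda>k. Rt k l) ` {1..})"
  using Rt_bounds by (intro bdd_aboveI[of _ 1]) auto

lemma Rt_le_f: "k \<ge> 1 \<Longrightarrow> Rt k l \<le> f l"
  unfolding f_def by (rule cSUP_upper[OF _ bddRt]) auto

lemma f_bounds: "0 \<le> f l \<and> f l \<le> 1"
proof
  show "0 \<le> f l" using Rt_le_f[of 1 l] Rt_bounds[of 1 l] by simp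
  show "f l \<le> 1" unfolding f_def using Rt_bounds by (intro cSUP_least) auto
qed


lemma claimA:
  fixes N :: nat and s b0 C :: real
  assumes Nb: "\<forall>i\<ge>1. n i \<le> N" and N1: "N \<ge> 1" and s: "s \<ge> 0" and b0: "b0 > 0" and C: "C > 0"
    and adm: "\<forall>r R. 0 < r \<and> r < R \<and> R < b0 \<longrightarrow>
       (\<forall>x\<in>E. real (covering_number r (ball x R \<inter> E)) \<le> C * (R / r) powr s)"
  shows "limsup (\<lambda>l. ereal (f l)) \<le> ereal s"
proof -
  obtain k0 where k0: "\<forall>k l. k0 \<le> l \<longrightarrow>
     real (Pr n k l) \<le> real N ^ k0 * (2 * C * 4 powr s) * (Pr c k l) powr (-s)"
    using lower[OF Nb N1 s b0 C adm] by blast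
  define K1 where "K1 = real N ^ k0 * (2 * C * 4 powr s)"
  have K1: "K1 > 0" unfolding K1_def using N1 C by simp
  define K where "K = max (ln K1) 0"
  have fle: "f l \<le> s + K / (real l * ln 2)" if l: "l \<ge> max k0 1" for l
  proof -
    have "Rt k l \<le> s + K / (real l * ln 2)" if k: "k \<ge> 1" for k
    proof -
      define D where "D = - ln (Pr c k l)"
      have D: "D \<ge> real l * ln 2" unfolding D_def by (rule den_ge)
      have lpos: "real l * ln 2 > 0" using l by simp
      have Dpos: "D > 0" using D lpos by linarith
      have "real (Pr n k l) \<le> K1 * (Pr c k l) powr (-s)" using k0 l unfolding K1_def by auto
      then have "ln (real (Pr n k l)) \<le> ln (K1 * (Pr c k l) powr (-s))"
        using Pr_n_pos[of k l] by simp
      also have "\<dots> = ln K1 + s * D"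
        using K1 Pr_c_pos[of k l] unfolding D_def by (simp add: ln_mult ln_powr)
      finally have num: "ln (real (Pr n k l)) \<le> ln K1 + s * D" .
      have "Rt k l = ln (real (Pr n k l)) / D" unfolding Rt_def D_def by simp
      also have "\<dots> \<le> (ln K1 + s * D) / D" using num Dpos by (simp add: divide_right_mono)
      also have "\<dots> = s + ln K1 / D" using Dpos by (simp add: field_simps)
      also have "ln K1 / D \<le> K / D" unfolding K_def using Dpos by (simp add: divide_right_mono)
      also have "K / D \<le> K / (real l * ln 2)" unfolding K_def using D lpos
        by (intro divide_left_mono) auto
      finally show ?thesis by simp
    qed
    then show ?thesis unfolding f_def by (intro cSUP_least) auto
  qed
  have "limsup (\<lambda>l. ereal (f l)) \<le> limsup (\<lambda>l. ereal (s + K / (real l * ln 2)))"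
  proof (rule Limsup_mono)
    show "\<forall>\<^sub>F l in sequentially. ereal (f l) \<le> ereal (s + K / (real l * ln 2))"
      unfolding eventually_sequentially using fle by (intro exI[of _ "max k0 1"]) auto
  qed
  also have "\<dots> = ereal s"
    by (rule lim_imp_Limsup) (simp_all add: lim_aux)
  finally show ?thesis .
qed

lemma claimB:
  fixes N :: nat and s :: real
  assumes Nb: "\<forall>i\<ge>1. n i \<le> N" and N1: "N \<ge> 1" and s: "s \<ge> 0"
    and lt: "limsup (\<lambda>l. ereal (f l)) < ereal s"
  shows "\<exists>b0>0. \<exists>C>0. \<forall>r R. 0 < r \<and> r < R \<and> R < b0 \<longrightarrow>
       (\<forall>x\<in>E. real (covering_number r (ball x R \<inter> E)) \<le> C * (R / r) powr s)"
proof -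
  have "eventually (\<lambda>l. ereal (f l) < ereal s) sequentially" using Limsup_lessD[OF lt] .
  then obtain l0 where l0: "\<forall>l\<ge>l0. f l < s" by (auto simp: eventually_sequentially)
  define K0 where "K0 = real N ^ l0"
  have K0: "K0 \<ge> 1" unfolding K0_def using N1 by simp
  have star: "\<forall>k\<ge>1. \<forall>l. real (Pr n k l) \<le> K0 * (Pr c k l) powr (-s)"
  proof (intro allI impI)
    fix k l :: nat assume k: "k \<ge> 1"
    have pw: "(Pr c k l) powr (-s) \<ge> 1"
      using powr_neg_anti[OF Pr_c_pos Pr_c_le1 s] by simp
    show "real (Pr n k l) \<le> K0 * (Pr c k l) powr (-s)"
    proof (cases "l \<ge> l0 \<and> l \<ge> 1")
      case True
      have "Rt k l < s" using Rt_le_f[OF k, of l] l0 True by force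
      moreover have Dpos: "- ln (Pr c k l) > 0"
      proof -
        have "real l * ln 2 > 0" using True by simp
        then show ?thesis using den_ge[where k=k and l=l] by linarith
      qed
      ultimately have "ln (real (Pr n k l)) < s * (- ln (Pr c k l))"
        unfolding Rt_def using pos_divide_less_eq[OF Dpos] by blast
      then have "exp (ln (real (Pr n k l))) < exp (s * (- ln (Pr c k l)))" by simp
      then have "real (Pr n k l) < (Pr c k l) powr (-s)"
        using Pr_n_pos[of k l] Pr_c_pos[of k l] by (simp add: powr_def)
      also have "\<dots> \<le> K0 * (Pr c k l) powr (-s)" using mult_right_mono[OF K0, of "Pr c k l powr -s"] pw by simp
      finally show ?thesis by simp
    next
      case False
      then have ll: "l \<le> l0" by auto
      have "real (Pr n k l) \<le> real (N ^ l)" using Pr_n_le[OF Nb] by (metis of_nat_le_iff)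
      also have "\<dots> \<le> K0" unfolding K0_def using N1 ll by (simp add: power_increasing)
      also have "\<dots> \<le> K0 * (Pr c k l) powr (-s)" using mult_left_mono[OF pw, of K0] K0 by simp
      finally show ?thesis .
    qed
  qed
  have "\<forall>r R. 0 < r \<and> r < R \<and> R < b - a \<longrightarrow>
       (\<forall>x\<in>E. real (covering_number r (ball x R \<inter> E)) \<le> 3 * real N ^ 2 * K0 * (R / r) powr s)"
    using upper[OF Nb N1 star s K0] L_0 by auto
  moreover have "3 * real N ^ 2 * K0 > 0" using N1 K0 by simp
  moreover have "b - a > 0" using ab by simp
  ultimately show ?thesis by blast
qed

end

theorem theorem1:
  fixes n :: "nat \<Rightarrow> nat" and c :: "nat \<Rightarrow> real" and a b :: real and E :: "real set"
  assumes n_ge: "\<forall>k\<ge>1. n k \<ge> 2"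
    and c_pos: "\<forall>k\<ge>1. c k > 0"
    and nc_lt: "\<forall>k\<ge>1. real (n k) * c k < 1"
    and ab: "a < b"
    and E: "E \<in> moran_class {a..b} n c"
    and bdd: "bdd_above (n ` {1..})"
  shows "ereal (assouad_dim E) =
    limsup (\<lambda>l. ereal (SUP k\<in>{1..}.
       ln (real (\<Prod>i\<in>{k+1..k+l}. n i)) / - ln (\<Prod>i\<in>{k+1..k+l}. c i)))"
proof -
  obtain J where hms: "homogeneous_moran_structure {a..b} n c J" and EJ: "E = moran_set n J"
    using E by (auto simp: moran_class_def)
  interpret M: moran n c a b J using n_ge c_pos nc_lt ab hms by unfold_locales
  have EE: "M.E = E" using EJ M.E_def by simp
  obtain N where Nb: "\<forall>i\<ge>1. n i \<le> N" using bdd unfolding bdd_above_def by auto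
  have N1: "N \<ge> 1" using Nb n_ge by (metis le_refl le_trans one_le_numeral)
  have rhs: "(\<lambda>l. ereal (SUP k\<in>{1..}.
       ln (real (\<Prod>i\<in>{k+1..k+l}. n i)) / - ln (\<Prod>i\<in>{k+1..k+l}. c i))) = (\<lambda>l. ereal (M.f l))"
    unfolding M.f_def M.Rt_def Pr_def by simp
  define d where "d = limsup (\<lambda>l. ereal (M.f l))"
  have d0: "0 \<le> d"
  proof -
    have "limsup (\<lambda>l. ereal 0) \<le> d" unfolding d_def
      by (rule Limsup_mono) (use M.f_bounds in auto)
    then show ?thesis by (simp add: Limsup_const zero_ereal_def)
  qed
  have d1: "d \<le> 1"
  proof -
    have "d \<le> limsup (\<lambda>l. ereal 1)" unfolding d_def
      by (rule Limsup_mono) (use M.f_bounds in auto)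
    then show ?thesis by (simp add: Limsup_const one_ereal_def)
  qed
  obtain e where de: "d = ereal e" using d0 d1 by (cases d) auto
  have e0: "0 \<le> e" using d0 de by simp
  define Adm where "Adm = {s. s \<ge> 0 \<and> (\<exists>b>0. \<exists>C>0. \<forall>r R. 0 < r \<and> r < R \<and> R < b \<longrightarrow>
       (\<forall>x\<in>E. real (covering_number r (ball x R \<inter> E)) \<le> C * (R / r) powr s))}"
  have ad: "assouad_dim E = Inf Adm" unfolding assouad_dim_def Adm_def ..
  have A: "e \<le> s" if s: "s \<in> Adm" for s
  proof -
    obtain b0 C where bC: "s \<ge> 0" "b0 > 0" "C > 0" "\<forall>r R. 0 < r \<and> r < R \<and> R < b0 \<longrightarrow>
       (\<forall>x\<in>M.E. real (covering_number r (ball x R \<inter> M.E)) \<le> C * (R / r) powr s)"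
      using s unfolding Adm_def EE by blast
    have "d \<le> ereal s" unfolding d_def by (rule M.claimA[OF Nb N1 bC])
    then show ?thesis using de by simp
  qed
  have B: "s \<in> Adm" if s: "s > e" for s
  proof -
    have s0: "s \<ge> 0" using s e0 by simp
    have "limsup (\<lambda>l. ereal (M.f l)) < ereal s" using s de d_def by simp
    from M.claimB[OF Nb N1 s0 this] show ?thesis unfolding Adm_def EE using s0 by blast
  qed
  have bb: "bdd_below Adm" unfolding Adm_def by (intro bdd_belowI[of _ 0]) auto
  have ne: "Adm \<noteq> {}" using B[of "e + 1"] by auto
  have "Inf Adm = e"
  proof (rule antisym)
    show "e \<le> Inf Adm" using A ne by (intro cInf_greatest) auto
    show "Inf Adm \<le> e"
    proof (rule field_le_epsilon)
      fix eps :: real assume "0 < eps"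
      then show "Inf Adm \<le> e + eps" using B[of "e + eps"] bb by (intro cInf_lower) auto
    qed
  qed
  then show ?thesis unfolding rhs ad using de d_def by simp
qed

end
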